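(* Let $X$ be a finite alphabet with $|X|\geq 2$ and let $\mathsf V$ be a nontrivial pseudovariety of finite semigroups closed under concatenation. Then the minimum ideal of $\overline{\Omega}_X\mathsf V$ contains no element of $\Omega^\mu_X\mathsf V$.
   Context: $\overline{\Omega}_X\mathsf V$ is the free pro-$\mathsf V$ semigroup on $X$. $\widehat{\mathbb N}$ is the profinite completion of $(\mathbb N,+)$ and $x\mapsto x^\alpha$ the usual $\alpha$-power operation. $\mu$ is the implicit signature consisting of multiplication together with all unary operations $x\mapsto x^\alpha$, $\alpha\in\widehat{\mathbb N}\setminus\mathbb N$, and $\Omega^\mu_X\mathsf V$ is the subalgebra of $\overline{\Omega}_X\mathsf V$ generated by $X$ under these operations (its elements are called $\mu$-words). A pseudovariety is closed under concatenation if the corresponding variety of rational languages is closed under concatenation product. *)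

theory Defs
  imports Main "HOL-Library.Nat_Bijection"
begin

text \<open>A finite semigroup is represented (up to isomorphism) by a finite nonempty
carrier A of natural numbers together with a multiplication that is closed and
associative on A.\<close>

type_synonym fsg = "nat set \<times> (nat \<Rightarrow> nat \<Rightarrow> nat)"

definition is_fsg :: "fsg \<Rightarrow> bool" where
  "is_fsg S \<longleftrightarrow> finite (fst S) \<and> fst S \<noteq> {}
     \<and> (\<forall>x\<in>fst S. \<forall>y\<in>fst S. snd S x y \<in> fst S)
     \<and> (\<forall>x\<in>fst S. \<forall>y\<in>fst S. \<forall>z\<in>fst S. snd S (snd S x y) z = snd S x (snd S y z))"

definition is_hom :: "fsg \<Rightarrow> fsg \<Rightarrow> (nat \<Rightarrow> nat) \<Rightarrow> bool" where
  "is_hom S T h \<longleftrightarrow> (\<forall>x\<in>fst S. h x \<in> fst T)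
     \<and> (\<forall>x\<in>fst S. \<forall>y\<in>fst S. h (snd S x y) = snd T (h x) (h y))"

definition prod_fsg :: "fsg \<Rightarrow> fsg \<Rightarrow> fsg" where
  "prod_fsg S T = (prod_encode ` (fst S \<times> fst T),
     (\<lambda>x y. case prod_decode x of (a, b) \<Rightarrow> case prod_decode y of (c, d) \<Rightarrow>
        prod_encode (snd S a c, snd T b d)))"

definition pseudovariety :: "fsg set \<Rightarrow> bool" where
  "pseudovariety V \<longleftrightarrow>
     (\<forall>S\<in>V. is_fsg S)
   \<and> (\<forall>S\<in>V. \<forall>B. B \<subseteq> fst S \<longrightarrow> B \<noteq> {} \<longrightarrow> (\<forall>x\<in>B. \<forall>y\<in>B. snd S x y \<in> B)
        \<longrightarrow> (B, snd S) \<in> V)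
   \<and> (\<forall>S\<in>V. \<forall>T h. is_fsg T \<longrightarrow> is_hom S T h \<longrightarrow> h ` fst S = fst T \<longrightarrow> T \<in> V)
   \<and> (\<forall>S\<in>V. \<forall>T\<in>V. prod_fsg S T \<in> V)"

definition nontrivial_pv :: "fsg set \<Rightarrow> bool" where
  "nontrivial_pv V \<longleftrightarrow> (\<exists>S\<in>V. card (fst S) \<ge> 2)"

fun weval :: "(nat \<Rightarrow> nat \<Rightarrow> nat) \<Rightarrow> (nat \<Rightarrow> nat) \<Rightarrow> nat list \<Rightarrow> nat" where
  "weval m f [] = undefined"
| "weval m f [a] = f a"
| "weval m f (a # b # w) = m (f a) (weval m f (b # w))"

text \<open>The languages of A^+ in the variety of rational languages corresponding to V
(Eilenberg): those recognised by a semigroup of V.\<close>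

definition V_lang :: "fsg set \<Rightarrow> nat set \<Rightarrow> nat list set \<Rightarrow> bool" where
  "V_lang V A L \<longleftrightarrow> (\<exists>S\<in>V. \<exists>f. (\<forall>a\<in>A. f a \<in> fst S) \<and> (\<exists>P. P \<subseteq> fst S \<and>
      L = {w. w \<noteq> [] \<and> set w \<subseteq> A \<and> weval (snd S) f w \<in> P}))"

definition closed_under_concat :: "fsg set \<Rightarrow> bool" where
  "closed_under_concat V \<longleftrightarrow> (\<forall>A. finite A \<longrightarrow> A \<noteq> {} \<longrightarrow>
     (\<forall>L K. V_lang V A L \<longrightarrow> V_lang V A K \<longrightarrow> V_lang V A {u @ v |u v. u \<in> L \<and> v \<in> K}))"

section \<open>Free pro-V semigroup as X-ary implicit operations on V\<close>

definition valid_idx :: "fsg set \<Rightarrow> fsg \<times> ('x \<Rightarrow> nat) \<Rightarrow> bool" where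
  "valid_idx V i \<longleftrightarrow> fst i \<in> V \<and> range (snd i) \<subseteq> fst (fst i)"

definition free_pro :: "fsg set \<Rightarrow> (fsg \<times> ('x \<Rightarrow> nat) \<Rightarrow> nat) set" where
  "free_pro V = {w. (\<forall>i. valid_idx V i \<longrightarrow> w i \<in> fst (fst i))
     \<and> (\<forall>i. \<not> valid_idx V i \<longrightarrow> w i = undefined)
     \<and> (\<forall>S T \<phi> h. S \<in> V \<longrightarrow> T \<in> V \<longrightarrow> range \<phi> \<subseteq> fst S \<longrightarrow> is_hom S T h
          \<longrightarrow> h (w (S, \<phi>)) = w (T, h \<circ> \<phi>))}"

definition pmult :: "fsg set \<Rightarrow> (fsg \<times> ('x \<Rightarrow> nat) \<Rightarrow> nat) \<Rightarrow> (fsg \<times> ('x \<Rightarrow> nat) \<Rightarrow> nat)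
     \<Rightarrow> (fsg \<times> ('x \<Rightarrow> nat) \<Rightarrow> nat)" where
  "pmult V u v = (\<lambda>i. if valid_idx V i then snd (fst i) (u i) (v i) else undefined)"

definition pgen :: "fsg set \<Rightarrow> 'x \<Rightarrow> (fsg \<times> ('x \<Rightarrow> nat) \<Rightarrow> nat)" where
  "pgen V x = (\<lambda>i. if valid_idx V i then snd i x else undefined)"

text \<open>Elements of the profinite completion of (N,+) outside N correspond to profinite
integers, given as compatible families of residues.\<close>

definition zhat :: "(nat \<Rightarrow> nat) set" where
  "zhat = {a. (\<forall>n>0. a n < n) \<and> (\<forall>n m. 0 < n \<longrightarrow> 0 < m \<longrightarrow> n dvd m \<longrightarrow> a m mod n = a n)}"

definition spow :: "(nat \<Rightarrow> nat \<Rightarrow> nat) \<Rightarrow> nat \<Rightarrow> nat \<Rightarrow> nat" where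
  "spow m s n = ((\<lambda>y. m y s) ^^ (n - 1)) s"

text \<open>s^alpha in a finite semigroup S: s^k with k beyond the index of s and
k congruent to alpha modulo the period of s.\<close>

definition apow :: "fsg \<Rightarrow> (nat \<Rightarrow> nat) \<Rightarrow> nat \<Rightarrow> nat" where
  "apow S a s = spow (snd S) s (fact (card (fst S)) + a (fact (card (fst S))))"

definition ppow :: "fsg set \<Rightarrow> (nat \<Rightarrow> nat) \<Rightarrow> (fsg \<times> ('x \<Rightarrow> nat) \<Rightarrow> nat)
     \<Rightarrow> (fsg \<times> ('x \<Rightarrow> nat) \<Rightarrow> nat)" where
  "ppow V a u = (\<lambda>i. if valid_idx V i then apow (fst i) a (u i) else undefined)"

inductive_set mu_words :: "fsg set \<Rightarrow> (fsg \<times> ('x \<Rightarrow> nat) \<Rightarrow> nat) set" for V where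
  gen: "pgen V x \<in> mu_words V"
| mult: "u \<in> mu_words V \<Longrightarrow> v \<in> mu_words V \<Longrightarrow> pmult V u v \<in> mu_words V"
| pow: "a \<in> zhat \<Longrightarrow> u \<in> mu_words V \<Longrightarrow> ppow V a u \<in> mu_words V"

definition is_ideal :: "fsg set \<Rightarrow> (fsg \<times> ('x \<Rightarrow> nat) \<Rightarrow> nat) set \<Rightarrow> bool" where
  "is_ideal V J \<longleftrightarrow> J \<subseteq> free_pro V \<and> J \<noteq> {}
     \<and> (\<forall>u\<in>free_pro V. \<forall>j\<in>J. pmult V u j \<in> J \<and> pmult V j u \<in> J)"

definition min_ideal :: "fsg set \<Rightarrow> (fsg \<times> ('x \<Rightarrow> nat) \<Rightarrow> nat) set" where
  "min_ideal V = \<Inter> {J. is_ideal V J}"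

end

theory Submission
  imports Defs
begin

definition Dset :: "nat \<Rightarrow> nat \<Rightarrow> nat list \<Rightarrow> nat set" where
  "Dset ex ey U = {i. \<exists>a b. U = a @ [ey] @ replicate i ex @ [ey] @ b}"

definition lead :: "nat \<Rightarrow> nat list \<Rightarrow> nat" where
  "lead ex U = length (takeWhile (\<lambda>c. c = ex) U)"

definition trail :: "nat \<Rightarrow> nat list \<Rightarrow> nat" where
  "trail ex U = lead ex (rev U)"

lemma Dset_len: "i \<in> Dset ex ey U \<Longrightarrow> i + 2 \<le> length U"
proof -
  assume "i \<in> Dset ex ey U"
  then obtain a b where "U = a @ [ey] @ replicate i ex @ [ey] @ b" unfolding Dset_def by blast
  hence "length U = length a + (1 + (i + (1 + length b)))" by simp
  thus ?thesis by simp
qed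

lemma Dset_sub: "Dset ex ey U \<subseteq> {..length U}"
  using Dset_len by fastforce

lemma Dset_fin: "finite (Dset ex ey U)"
  by (rule finite_subset[OF Dset_sub]) simp

lemma Dset_short: "length U < 2 \<Longrightarrow> Dset ex ey U = {}"
  using Dset_len by fastforce

lemma rep_split: "xs @ ys = replicate i c @ [d] \<Longrightarrow> ys \<noteq> [] \<Longrightarrow>
   \<exists>m\<le>i. xs = replicate m c \<and> ys = replicate (i-m) c @ [d]"
proof (induction xs arbitrary: i)
  case Nil thus ?case by simp
next
  case (Cons x xs)
  show ?case
  proof (cases i)
    case 0
    hence "xs @ ys = []" using Cons.prems(1) by simp
    thus ?thesis using Cons.prems(2) by simp
  next
    case (Suc j)
    with Cons.prems have "x = c" "xs @ ys = replicate j c @ [d]" by simp_all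
    from Cons.IH[OF this(2) Cons.prems(2)] obtain m where m: "m \<le> j" "xs = replicate m c"
      "ys = replicate (j-m) c @ [d]" by blast
    have "Suc m \<le> i" "x # xs = replicate (Suc m) c" "ys = replicate (i - Suc m) c @ [d]"
      using m Suc \<open>x = c\<close> by simp_all
    thus ?thesis by (intro exI[of _ "Suc m"]) simp
  qed
qed

lemma tw_rep: "ey \<noteq> ex \<Longrightarrow> takeWhile (\<lambda>c. c = ex) (replicate m ex @ ey # r) = replicate m ex"
  by (induction m) auto

lemma DsetI: "U = a @ [ey] @ replicate i ex @ [ey] @ b \<Longrightarrow> i \<in> Dset ex ey U"
  unfolding Dset_def by (intro CollectI exI[of _ a] exI[of _ b])

lemma Dset_append:
  assumes "ex \<noteq> ey"
  shows "Dset ex ey (U @ V) \<subseteq> Dset ex ey U \<union> Dset ex ey V \<union>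
     (if ey \<in> set U \<and> ey \<in> set V then {trail ex U + lead ex V} else {})"
proof
  fix i assume "i \<in> Dset ex ey (U @ V)"
  then obtain a b where h0: "U @ V = a @ [ey] @ replicate i ex @ [ey] @ b"
    unfolding Dset_def by blast
  define F where "F = [ey] @ replicate i ex @ [ey]"
  have h: "U @ V = a @ (F @ b)" using h0 by (simp add: F_def)
  have ex1: "\<exists>us. (U = a @ us \<and> us @ V = F @ b) \<or> (U @ us = a \<and> V = us @ F @ b)"
    using h unfolding append_eq_append_conv2 .
  from ex1 obtain us where "(U = a @ us \<and> us @ V = F @ b) \<or> (U @ us = a \<and> V = us @ F @ b)" ..
  then show "i \<in> Dset ex ey U \<union> Dset ex ey V \<union>
     (if ey \<in> set U \<and> ey \<in> set V then {trail ex U + lead ex V} else {})"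
  proof
    assume "U @ us = a \<and> V = us @ F @ b"
    hence "i \<in> Dset ex ey V" by (intro DsetI[of _ us _ _ _ b]) (simp add: F_def)
    thus ?thesis by simp
  next
    assume A: "U = a @ us \<and> us @ V = F @ b"
    have ex2: "\<exists>us'. (us = F @ us' \<and> us' @ V = b) \<or> (us @ us' = F \<and> V = us' @ b)"
      using A[THEN conjunct2] unfolding append_eq_append_conv2 .
    from ex2 obtain us' where "(us = F @ us' \<and> us' @ V = b) \<or> (us @ us' = F \<and> V = us' @ b)" ..
    then show ?thesis
    proof
      assume "us = F @ us' \<and> us' @ V = b"
      hence "i \<in> Dset ex ey U" using A by (intro DsetI[of _ a _ _ _ us']) (simp add: F_def)
      thus ?thesis by simp
    next
      assume B: "us @ us' = F \<and> V = us' @ b"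
      show ?thesis
      proof (cases "us' = []")
        case True
        hence "U = a @ [ey] @ replicate i ex @ [ey] @ []" using A B by (simp add: F_def)
        hence "i \<in> Dset ex ey U" by (rule DsetI)
        thus ?thesis by simp
      next
        case us'ne: False
        show ?thesis
        proof (cases us)
          case Nil
          hence "V = [] @ [ey] @ replicate i ex @ [ey] @ b" using B by (simp add: F_def)
          hence "i \<in> Dset ex ey V" by (rule DsetI)
          thus ?thesis by simp
        next
          case (Cons c us1)
          with B have "c = ey" "us1 @ us' = replicate i ex @ [ey]" by (simp_all add: F_def)
          from rep_split[OF this(2) us'ne] obtain m where m: "m \<le> i" "us1 = replicate m ex"
            "us' = replicate (i-m) ex @ [ey]" by blast
          have U: "U = a @ ey # replicate m ex" using A Cons m \<open>c = ey\<close> by simp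
          have V: "V = replicate (i-m) ex @ ey # b" using B m by simp
          have "trail ex U = m" using assms unfolding U trail_def lead_def
            by (simp add: tw_rep)
          moreover have "lead ex V = i - m" using assms unfolding V lead_def
            by (simp add: tw_rep)
          moreover have "ey \<in> set U" "ey \<in> set V" using U V by auto
          ultimately show ?thesis using m(1) by simp
        qed
      qed
    qed
  qed
qed

lemma Dset_pow:
  assumes "ex \<noteq> ey" "k \<ge> 1"
  shows "Dset ex ey (concat (replicate k U)) \<subseteq> Dset ex ey U \<union> {trail ex U + lead ex U}"
  using assms(2)
proof (induction k)
  case 0 thus ?case by simp
next
  case (Suc k)
  show ?case
  proof (cases "k = 0")
    case True thus ?thesis by auto
  next
    case False
    hence IH: "Dset ex ey (concat (replicate k U)) \<subseteq> Dset ex ey U \<union> {trail ex U + lead ex U}"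
      using Suc.IH by simp
    have eq: "concat (replicate (Suc k) U) = U @ concat (replicate k U)" by simp
    have s1: "Dset ex ey (concat (replicate (Suc k) U)) \<subseteq> Dset ex ey U \<union> Dset ex ey (concat (replicate k U)) \<union>
      (if ey \<in> set U \<and> ey \<in> set (concat (replicate k U)) then {trail ex U + lead ex (concat (replicate k U))} else {})"
      unfolding eq by (rule Dset_append[OF assms(1)])
    show ?thesis
    proof (cases "ey \<in> set U")
      case True
      obtain k' where "k = Suc k'" using False not0_implies_Suc by blast
      hence ck: "concat (replicate k U) = U @ concat (replicate k' U)" by simp
      have "takeWhile (\<lambda>c. c = ex) (U @ concat (replicate k' U)) = takeWhile (\<lambda>c. c = ex) U"
        using takeWhile_append1[OF True, of "\<lambda>c. c = ex"] assms(1) by simp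
      hence "lead ex (concat (replicate k U)) = lead ex U" unfolding lead_def ck by simp
      hence "(if ey \<in> set U \<and> ey \<in> set (concat (replicate k U)) then {trail ex U + lead ex (concat (replicate k U))} else {})
          \<subseteq> {trail ex U + lead ex U}" by simp
      thus ?thesis using s1 IH by blast
    next
      case False
      hence "(if ey \<in> set U \<and> ey \<in> set (concat (replicate k U)) then {trail ex U + lead ex (concat (replicate k U))} else {})
          = {}" by simp
      thus ?thesis using s1 IH by blast
    qed
  qed
qed

fun zz :: "'x \<Rightarrow> 'x \<Rightarrow> nat \<Rightarrow> 'x list" where
  "zz x y 0 = [y]"
| "zz x y (Suc k) = zz x y k @ replicate (Suc k) x @ [y]"

lemma zz_last: "\<exists>p. zz x y k = p @ [y]"
  by (cases k) auto

lemma Dset_mono_app: "Dset ex ey U \<subseteq> Dset ex ey (p @ U @ q)"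
proof
  fix i assume "i \<in> Dset ex ey U"
  then obtain a b where "U = a @ [ey] @ replicate i ex @ [ey] @ b" by (auto simp: Dset_def)
  hence "p @ U @ q = (p @ a) @ [ey] @ replicate i ex @ [ey] @ (b @ q)" by simp
  thus "i \<in> Dset ex ey (p @ U @ q)" by (rule DsetI)
qed

lemma Dset_zz: "inj enc \<Longrightarrow> {1..k} \<subseteq> Dset (enc x) (enc y) (map enc (zz x y k))"
proof (induction k)
  case 0 thus ?case by simp
next
  case (Suc k)
  obtain p where p: "zz x y k = p @ [y]" using zz_last[of x y k] by blast
  have "Suc k \<in> Dset (enc x) (enc y) (map enc (zz x y (Suc k)))"
  proof -
    have "map enc (zz x y (Suc k)) = map enc p @ [enc y] @ replicate (Suc k) (enc x) @ [enc y] @ []"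
      using p by simp
    thus ?thesis by (rule DsetI)
  qed
  moreover have "Dset (enc x) (enc y) (map enc (zz x y k)) \<subseteq>
     Dset (enc x) (enc y) (map enc (zz x y (Suc k)))"
    using Dset_mono_app[of "enc x" "enc y" "map enc (zz x y k)" "[]"] by simp
  ultimately show ?case using Suc by (auto simp: atLeastAtMostSuc_conv)
qed

fun ev :: "(nat \<Rightarrow> nat \<Rightarrow> nat) \<Rightarrow> ('x \<Rightarrow> nat) \<Rightarrow> 'x list \<Rightarrow> nat" where
  "ev m \<phi> [] = undefined"
| "ev m \<phi> [a] = \<phi> a"
| "ev m \<phi> (a # b # w) = m (\<phi> a) (ev m \<phi> (b # w))"

lemma fsg_closed: "is_fsg T \<Longrightarrow> x \<in> fst T \<Longrightarrow> y \<in> fst T \<Longrightarrow> snd T x y \<in> fst T"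
  unfolding is_fsg_def by blast

lemma ev_in: "is_fsg T \<Longrightarrow> range \<phi> \<subseteq> fst T \<Longrightarrow> E \<noteq> [] \<Longrightarrow> ev (snd T) \<phi> E \<in> fst T"
proof (induction "snd T" \<phi> E rule: ev.induct)
  case (3 \<phi> a b w) thus ?case using fsg_closed[of T] by auto
qed auto

lemma ev_app:
  assumes "is_fsg T" "range \<phi> \<subseteq> fst T"
  shows "E1 \<noteq> [] \<Longrightarrow> E2 \<noteq> [] \<Longrightarrow> ev (snd T) \<phi> (E1 @ E2) = snd T (ev (snd T) \<phi> E1) (ev (snd T) \<phi> E2)"
proof (induction E1)
  case Nil thus ?case by simp
next
  case (Cons a E1)
  show ?case
  proof (cases "E1 = []")
    case True thus ?thesis using Cons.prems by (cases E2) auto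
  next
    case False
    then obtain b r where E1: "E1 = b # r" by (cases E1) auto
    have "ev (snd T) \<phi> ((a # E1) @ E2) = snd T (\<phi> a) (ev (snd T) \<phi> (E1 @ E2))"
      using E1 by simp
    also have "\<dots> = snd T (\<phi> a) (snd T (ev (snd T) \<phi> E1) (ev (snd T) \<phi> E2))"
      using Cons False by simp
    also have "\<dots> = snd T (snd T (\<phi> a) (ev (snd T) \<phi> E1)) (ev (snd T) \<phi> E2)"
    proof -
      have as: "\<forall>x\<in>fst T. \<forall>y\<in>fst T. \<forall>z\<in>fst T. snd T (snd T x y) z = snd T x (snd T y z)"
        using assms(1) unfolding is_fsg_def by blast
      have "\<phi> a \<in> fst T" using assms(2) by blast
      thus ?thesis using as ev_in[OF assms False] ev_in[OF assms Cons.prems(2)] by simp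
    qed
    finally show ?thesis using E1 by simp
  qed
qed

lemma ev_weval: "ev m (f \<circ> enc) E = weval m f (map enc E)"
  by (induction m "f \<circ> enc" E rule: ev.induct) auto

lemma weval_in: "is_fsg S \<Longrightarrow> \<forall>a\<in>A. f a \<in> fst S \<Longrightarrow> w \<noteq> [] \<Longrightarrow> set w \<subseteq> A \<Longrightarrow> weval (snd S) f w \<in> fst S"
proof (induction w)
  case (Cons a w) thus ?case using fsg_closed[of S] by (cases w) auto
qed simp

lemma prod_mult: "snd (prod_fsg S T) (prod_encode (a, b)) (prod_encode (c, d)) = prod_encode (snd S a c, snd T b d)"
  by (simp add: prod_fsg_def)

lemma weval_prod: "w \<noteq> [] \<Longrightarrow> weval (snd (prod_fsg S T)) (\<lambda>a. prod_encode (f a, g a)) w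
   = prod_encode (weval (snd S) f w, weval (snd T) g w)"
proof (induction w)
  case (Cons a w) thus ?case by (cases w) (simp_all add: prod_mult)
qed simp

definition Ap :: "nat set \<Rightarrow> nat list set" where
  "Ap A = {w. w \<noteq> [] \<and> set w \<subseteq> A}"

lemma pv_fsg: assumes "pseudovariety V" "S \<in> V" shows "is_fsg S"
  using assms(1)[unfolded pseudovariety_def, THEN conjunct1] assms(2) by blast

lemma pv_sub: assumes "pseudovariety V" "S \<in> V" "B \<subseteq> fst S" "B \<noteq> {}" "\<forall>x\<in>B. \<forall>y\<in>B. snd S x y \<in> B"
  shows "(B, snd S) \<in> V"
proof -
  have "\<forall>S\<in>V. \<forall>B. B \<subseteq> fst S \<longrightarrow> B \<noteq> {} \<longrightarrow> (\<forall>x\<in>B. \<forall>y\<in>B. snd S x y \<in> B) \<longrightarrow> (B, snd S) \<in> V"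
    using assms(1)[unfolded pseudovariety_def, THEN conjunct2, THEN conjunct1] .
  thus ?thesis using assms(2-) by blast
qed

lemma pv_prod: assumes "pseudovariety V" "S \<in> V" "T \<in> V" shows "prod_fsg S T \<in> V"
proof -
  have "\<forall>S\<in>V. \<forall>T\<in>V. prod_fsg S T \<in> V"
    using assms(1)[unfolded pseudovariety_def, THEN conjunct2, THEN conjunct2, THEN conjunct2] .
  thus ?thesis using assms(2,3) by blast
qed

lemma vl_univ: "pseudovariety V \<Longrightarrow> S \<in> V \<Longrightarrow> V_lang V A (Ap A)"
proof -
  assume pv: "pseudovariety V" and S: "S \<in> V"
  hence fs: "is_fsg S" by (rule pv_fsg)
  have "fst S \<noteq> {}" using fs unfolding is_fsg_def by blast
  then obtain s where s: "s \<in> fst S" by blast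
  have fa: "\<forall>a\<in>A. (\<lambda>_. s) a \<in> fst S" using s by simp
  have eq: "Ap A = {w. w \<noteq> [] \<and> set w \<subseteq> A \<and> weval (snd S) (\<lambda>_. s) w \<in> fst S}"
    using weval_in[OF fs fa] unfolding Ap_def by blast
  show ?thesis unfolding V_lang_def
    by (intro bexI[OF _ S] exI[of _ "\<lambda>_. s"] conjI exI[of _ "fst S"] fa eq subset_refl)
qed

lemma vl_compl: "pseudovariety V \<Longrightarrow> V_lang V A L \<Longrightarrow> V_lang V A (Ap A - L)"
proof -
  assume pv: "pseudovariety V" "V_lang V A L"
  then obtain S f P where S: "S \<in> V" "\<forall>a\<in>A. f a \<in> fst S" "P \<subseteq> fst S"
    "L = {w. w \<noteq> [] \<and> set w \<subseteq> A \<and> weval (snd S) f w \<in> P}" unfolding V_lang_def by blast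
  have fs: "is_fsg S" using pv S pv_fsg by blast
  have "Ap A - L = {w. w \<noteq> [] \<and> set w \<subseteq> A \<and> weval (snd S) f w \<in> fst S - P}"
    using weval_in[OF fs S(2)] unfolding S(4) Ap_def by blast
  moreover have "fst S - P \<subseteq> fst S" by blast
  ultimately show ?thesis unfolding V_lang_def
    by (intro bexI[OF _ S(1)] exI[of _ f] conjI exI[of _ "fst S - P"] S(2))
qed

lemma vl_int: "pseudovariety V \<Longrightarrow> V_lang V A L \<Longrightarrow> V_lang V A K \<Longrightarrow> V_lang V A (L \<inter> K)"
proof -
  assume pv: "pseudovariety V" "V_lang V A L" "V_lang V A K"
  then obtain S f P where S: "S \<in> V" "\<forall>a\<in>A. f a \<in> fst S" "P \<subseteq> fst S"
    "L = {w. w \<noteq> [] \<and> set w \<subseteq> A \<and> weval (snd S) f w \<in> P}" unfolding V_lang_def by blast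
  obtain T g Q where T: "T \<in> V" "\<forall>a\<in>A. g a \<in> fst T" "Q \<subseteq> fst T"
    "K = {w. w \<noteq> [] \<and> set w \<subseteq> A \<and> weval (snd T) g w \<in> Q}" using pv unfolding V_lang_def by blast
  have PV: "prod_fsg S T \<in> V" using pv_prod[OF pv(1) S(1) T(1)] .
  have "L \<inter> K = {w. w \<noteq> [] \<and> set w \<subseteq> A \<and>
      weval (snd (prod_fsg S T)) (\<lambda>a. prod_encode (f a, g a)) w \<in> prod_encode ` (P \<times> Q)}"
  proof -
    have e: "\<And>w. w \<noteq> [] \<Longrightarrow> (weval (snd (prod_fsg S T)) (\<lambda>a. prod_encode (f a, g a)) w \<in> prod_encode ` (P \<times> Q))
       = (weval (snd S) f w \<in> P \<and> weval (snd T) g w \<in> Q)"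
      by (simp add: weval_prod inj_image_mem_iff[OF inj_prod_encode])
    show ?thesis unfolding S(4) T(4) using e by blast
  qed
  moreover have "\<forall>a\<in>A. prod_encode (f a, g a) \<in> fst (prod_fsg S T)"
    using S(2) T(2) by (auto simp: prod_fsg_def)
  moreover have "prod_encode ` (P \<times> Q) \<subseteq> fst (prod_fsg S T)"
    using S(3) T(3) by (auto simp: prod_fsg_def)
  ultimately show ?thesis unfolding V_lang_def
    by (intro bexI[OF _ PV] exI[of _ "\<lambda>a. prod_encode (f a, g a)"] conjI exI[of _ "prod_encode ` (P \<times> Q)"])
qed

lemma vl_conc: "closed_under_concat V \<Longrightarrow> finite A \<Longrightarrow> A \<noteq> {} \<Longrightarrow> V_lang V A L \<Longrightarrow> V_lang V A K
   \<Longrightarrow> V_lang V A {u @ v |u v. u \<in> L \<and> v \<in> K}"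
  unfolding closed_under_concat_def by blast

lemma two_elems: "2 \<le> card S \<Longrightarrow> \<exists>s t. s \<in> S \<and> t \<in> S \<and> s \<noteq> t"
proof -
  assume c: "2 \<le> card S"
  hence "S \<noteq> {}" by auto
  then obtain s where s: "s \<in> S" by blast
  have "finite S" using c card.infinite by fastforce
  hence "card (S - {s}) \<ge> 1" using c s by simp
  hence "S - {s} \<noteq> {}" by (metis card.empty not_one_le_zero)
  then obtain t where "t \<in> S - {s}" by blast
  thus ?thesis using s by blast
qed

lemma vl_letter:
  assumes pv: "pseudovariety V" and nt: "nontrivial_pv V" and cc: "closed_under_concat V"
    and A: "finite A" "A \<noteq> {}" "a \<in> A"
  shows "V_lang V A {[a]}"
proof -
  obtain S where S: "S \<in> V" "card (fst S) \<ge> 2" using nt unfolding nontrivial_pv_def by blast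
  obtain s t where st: "s \<in> fst S" "t \<in> fst S" "s \<noteq> t" using two_elems[OF S(2)] by blast
  define f where "f = (\<lambda>c. if c = a then s else t)"
  define L1 where "L1 = {w. w \<noteq> [] \<and> set w \<subseteq> A \<and> weval (snd S) f w \<in> {s}}"
  have 1: "V_lang V A L1" unfolding V_lang_def L1_def
  proof (intro bexI[OF _ S(1)] exI[of _ f] conjI exI[of _ "{s}"])
    show "\<forall>a\<in>A. f a \<in> fst S" using st by (simp add: f_def)
  qed (use st in auto)
  define L2 where "L2 = {u @ v |u v. u \<in> Ap A \<and> v \<in> Ap A}"
  have 2: "V_lang V A L2" unfolding L2_def using vl_conc[OF cc A(1,2)] vl_univ[OF pv S(1)] by blast
  have 3: "V_lang V A (L1 \<inter> (Ap A - L2))" using vl_int[OF pv 1 vl_compl[OF pv 2]] .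
  have "L1 \<inter> (Ap A - L2) = {[a]}"
  proof
    have a1: "[a] \<in> L1" using A(3) by (simp add: L1_def f_def)
    have a2: "[a] \<in> Ap A" using A(3) by (simp add: Ap_def)
    have a3: "[a] \<notin> L2"
    proof
      assume "[a] \<in> L2"
      then obtain u v where "[a] = u @ v" "u \<in> Ap A" "v \<in> Ap A" unfolding L2_def by blast
      hence "length [a] = length u + length v" "u \<noteq> []" "v \<noteq> []" by (auto simp: Ap_def)
      thus False by (cases u; cases v) auto
    qed
    show "{[a]} \<subseteq> L1 \<inter> (Ap A - L2)" using a1 a2 a3 by blast
  next
    show "L1 \<inter> (Ap A - L2) \<subseteq> {[a]}"
    proof
      fix w assume w: "w \<in> L1 \<inter> (Ap A - L2)"
      then obtain c r where wc: "w = c # r" "c \<in> A" "set r \<subseteq> A"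
        by (cases w) (auto simp: L1_def)
      have "r = []"
      proof (rule ccontr)
        assume "r \<noteq> []"
        hence "w \<in> L2" unfolding L2_def Ap_def using wc
          by (intro CollectI exI[of _ "[c]"] exI[of _ r]) auto
        thus False using w by auto
      qed
      hence "f c = s" using w wc by (auto simp: L1_def)
      hence "c = a" using st(3) by (auto simp: f_def split: if_splits)
      thus "w \<in> {[a]}" using wc \<open>r = []\<close> by simp
    qed
  qed
  thus ?thesis using 3 by simp
qed

lemma vl_word:
  assumes pv: "pseudovariety V" and nt: "nontrivial_pv V" and cc: "closed_under_concat V"
    and A: "finite A" "A \<noteq> {}"
  shows "z \<noteq> [] \<Longrightarrow> set z \<subseteq> A \<Longrightarrow> V_lang V A {z}"
proof (induction z)
  case Nil thus ?case by simp
next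
  case (Cons c z)
  show ?case
  proof (cases "z = []")
    case True thus ?thesis using vl_letter[OF pv nt cc A] Cons.prems by simp
  next
    case False
    have eq: "{c # z} = {u @ v |u v. u \<in> {[c]} \<and> v \<in> {z}}" by auto
    have h2: "V_lang V A {z}" using Cons.IH False Cons.prems by simp
    have h1: "V_lang V A {[c]}" using vl_letter[OF pv nt cc A] Cons.prems by simp
    show ?thesis unfolding eq by (rule vl_conc[OF cc A h1 h2])
  qed
qed

lemma fp_val: assumes "w \<in> free_pro V" "valid_idx V i" shows "w i \<in> fst (fst i)"
  using assms(1)[unfolded free_pro_def, THEN CollectD, THEN conjunct1, rule_format, OF assms(2)] .

lemma fp_nat: assumes "w \<in> free_pro V" "S \<in> V" "T \<in> V" "range \<phi> \<subseteq> fst S" "is_hom S T h"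
  shows "h (w (S, \<phi>)) = w (T, h \<circ> \<phi>)"
  using assms(1)[unfolded free_pro_def, THEN CollectD, THEN conjunct2, THEN conjunct2, rule_format, OF assms(2-5)] .

lemma hom_in: "is_hom S T h \<Longrightarrow> x \<in> fst S \<Longrightarrow> h x \<in> fst T"
  unfolding is_hom_def by blast

lemma hom_mult: "is_hom S T h \<Longrightarrow> x \<in> fst S \<Longrightarrow> y \<in> fst S \<Longrightarrow> h (snd S x y) = snd T (h x) (h y)"
  unfolding is_hom_def by blast

lemma valid_hom: assumes "T \<in> V" "range \<phi> \<subseteq> fst S" "is_hom S T h" shows "valid_idx V (T, h \<circ> \<phi>)"
proof -
  have "range (h \<circ> \<phi>) \<subseteq> fst T"
  proof
    fix y assume "y \<in> range (h \<circ> \<phi>)"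
    then obtain x where "y = h (\<phi> x)" by auto
    moreover have "\<phi> x \<in> fst S" using assms(2) by auto
    ultimately show "y \<in> fst T" using hom_in[OF assms(3)] by simp
  qed
  thus ?thesis using assms(1) by (simp add: valid_idx_def)
qed

lemma pgen_in: fixes x :: 'x shows "pgen V x \<in> free_pro V"
proof -
  have A: "\<forall>i. valid_idx V i \<longrightarrow> pgen V x i \<in> fst (fst i)"
    unfolding pgen_def valid_idx_def by auto
  have B: "\<forall>i. \<not> valid_idx V i \<longrightarrow> pgen V x i = undefined"
    unfolding pgen_def by auto
  have C: "\<forall>S T \<phi> h. S \<in> V \<longrightarrow> T \<in> V \<longrightarrow> range \<phi> \<subseteq> fst S \<longrightarrow> is_hom S T h
          \<longrightarrow> h (pgen V x (S, \<phi>)) = pgen V x (T, h \<circ> \<phi>)"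
  proof (intro allI impI)
    fix S T and \<phi> :: "'x \<Rightarrow> nat" and h assume S: "S \<in> V" and T: "T \<in> V" and r: "range \<phi> \<subseteq> fst S" and h: "is_hom S T h"
    have v1: "valid_idx V (S, \<phi>)" using S r by (simp add: valid_idx_def)
    have v2: "valid_idx V (T, h \<circ> \<phi>)" using valid_hom[OF T r h] .
    show "h (pgen V x (S, \<phi>)) = pgen V x (T, h \<circ> \<phi>)" using v1 v2 by (simp add: pgen_def)
  qed
  show ?thesis unfolding free_pro_def by (intro CollectI conjI A B C)
qed

lemma pmult_in: fixes u v :: "fsg \<times> ('x \<Rightarrow> nat) \<Rightarrow> nat" shows "pseudovariety V \<Longrightarrow> u \<in> free_pro V \<Longrightarrow> v \<in> free_pro V \<Longrightarrow> pmult V u v \<in> free_pro V"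
proof -
  assume pv: "pseudovariety V" and u: "u \<in> free_pro V" and v: "v \<in> free_pro V"
  have A: "\<forall>i. valid_idx V i \<longrightarrow> pmult V u v i \<in> fst (fst i)"
  proof (intro allI impI)
    fix i :: "fsg \<times> ('x \<Rightarrow> nat)" assume vi: "valid_idx V i"
    hence "is_fsg (fst i)" using pv pv_fsg valid_idx_def by blast
    moreover have "u i \<in> fst (fst i)" "v i \<in> fst (fst i)" using fp_val[OF u vi] fp_val[OF v vi] by auto
    ultimately show "pmult V u v i \<in> fst (fst i)" using vi fsg_closed by (simp add: pmult_def)
  qed
  have B: "\<forall>S T \<phi> h. S \<in> V \<longrightarrow> T \<in> V \<longrightarrow> range \<phi> \<subseteq> fst S \<longrightarrow> is_hom S T h
          \<longrightarrow> h (pmult V u v (S, \<phi>)) = pmult V u v (T, h \<circ> \<phi>)"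
  proof (intro allI impI)
    fix S T and \<phi> :: "'x \<Rightarrow> nat" and h assume S: "S \<in> V" and T: "T \<in> V" and r: "range \<phi> \<subseteq> fst S" and h: "is_hom S T h"
    have v1: "valid_idx V (S, \<phi>)" using S r by (simp add: valid_idx_def)
    have v2: "valid_idx V (T, h \<circ> \<phi>)" using valid_hom[OF T r h] .
    have "u (S, \<phi>) \<in> fst S" "v (S, \<phi>) \<in> fst S" using fp_val[OF u v1] fp_val[OF v v1] by auto
    hence "h (snd S (u (S, \<phi>)) (v (S, \<phi>))) = snd T (h (u (S, \<phi>))) (h (v (S, \<phi>)))"
      using hom_mult[OF h] by blast
    also have "\<dots> = snd T (u (T, h \<circ> \<phi>)) (v (T, h \<circ> \<phi>))"
      using fp_nat[OF u S T r h] fp_nat[OF v S T r h] by simp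
    finally show "h (pmult V u v (S, \<phi>)) = pmult V u v (T, h \<circ> \<phi>)"
      using v1 v2 by (simp add: pmult_def)
  qed
  have C: "\<forall>i. \<not> valid_idx V i \<longrightarrow> pmult V u v i = undefined" by (simp add: pmult_def)
  show ?thesis unfolding free_pro_def by (intro CollectI conjI A B C)
qed

fun wel :: "fsg set \<Rightarrow> 'x list \<Rightarrow> (fsg \<times> ('x \<Rightarrow> nat) \<Rightarrow> nat)" where
  "wel V [] = undefined"
| "wel V [a] = pgen V a"
| "wel V (a # b # w) = pmult V (pgen V a) (wel V (b # w))"

lemma wel_in: "pseudovariety V \<Longrightarrow> E \<noteq> [] \<Longrightarrow> wel V E \<in> free_pro V"
  by (induction V E rule: wel.induct) (auto intro: pgen_in pmult_in simp del: pmult_def)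

lemma wel_val: "valid_idx V (T, \<phi>) \<Longrightarrow> E \<noteq> [] \<Longrightarrow> wel V E (T, \<phi>) = ev (snd T) \<phi> E"
  by (induction V E rule: wel.induct) (auto simp: pgen_def pmult_def)

lemma gen_val:
  fixes v :: "fsg \<times> ('x \<Rightarrow> nat) \<Rightarrow> nat"
  assumes pv: "pseudovariety V" and vi: "valid_idx V (T, \<phi>)" and v: "v \<in> free_pro V"
  shows "\<exists>E. E \<noteq> [] \<and> v (T, \<phi>) = ev (snd T) \<phi> E"
proof -
  have T: "T \<in> V" "range \<phi> \<subseteq> fst T" using vi by (auto simp: valid_idx_def)
  have fs: "is_fsg T" using pv T pv_fsg by blast
  define W where "W = {ev (snd T) \<phi> E | E. E \<noteq> []}"
  have W1: "W \<subseteq> fst T" using ev_in[OF fs T(2)] by (auto simp: W_def)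
  have W2: "W \<noteq> {}" unfolding W_def by (rule notI) (metis (mono_tags, lifting) empty_iff list.distinct(1) mem_Collect_eq)
  have W3: "\<forall>x\<in>W. \<forall>y\<in>W. snd T x y \<in> W"
  proof (intro ballI)
    fix x y assume "x \<in> W" "y \<in> W"
    then obtain E1 E2 where "E1 \<noteq> []" "E2 \<noteq> []" "x = ev (snd T) \<phi> E1" "y = ev (snd T) \<phi> E2"
      by (auto simp: W_def)
    hence "snd T x y = ev (snd T) \<phi> (E1 @ E2)" using ev_app[OF fs T(2)] by simp
    thus "snd T x y \<in> W" using \<open>E1 \<noteq> []\<close> by (auto simp: W_def)
  qed
  have T': "(W, snd T) \<in> V" using pv_sub[OF pv T(1) W1 W2 W3] .
  have rW: "range \<phi> \<subseteq> W"
  proof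
    fix c assume "c \<in> range \<phi>"
    then obtain a where "c = \<phi> a" by blast
    hence "c = ev (snd T) \<phi> [a]" by simp
    thus "c \<in> W" unfolding W_def by blast
  qed
  have h: "is_hom (W, snd T) T id" using W1 unfolding is_hom_def by auto
  have "id (v ((W, snd T), \<phi>)) = v (T, id \<circ> \<phi>)"
    using fp_nat[OF v T' T(1) _ h] rW by simp
  moreover have "valid_idx V ((W, snd T), \<phi>)" using T' rW by (simp add: valid_idx_def)
  hence "v ((W, snd T), \<phi>) \<in> W" using fp_val[OF v] by fastforce
  ultimately have "v (T, \<phi>) \<in> W" by simp
  thus ?thesis unfolding W_def by blast
qed

lemma cr_snoc: "concat (replicate (Suc n) E) = concat (replicate n E) @ E"
  by (induction n) auto

lemma spow_ev:
  assumes "is_fsg T" "range \<phi> \<subseteq> fst T" "E \<noteq> []"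
  shows "((\<lambda>y. snd T y (ev (snd T) \<phi> E)) ^^ j) (ev (snd T) \<phi> E) = ev (snd T) \<phi> (concat (replicate (Suc j) E))"
proof (induction j)
  case 0 thus ?case by simp
next
  case (Suc j)
  define s where "s = ev (snd T) \<phi> E"
  have ne: "concat (replicate (Suc j) E) \<noteq> []" using assms(3) by simp
  have "((\<lambda>y. snd T y s) ^^ Suc j) s = snd T (((\<lambda>y. snd T y s) ^^ j) s) s" by simp
  also have "\<dots> = snd T (ev (snd T) \<phi> (concat (replicate (Suc j) E))) s"
    using Suc.IH unfolding s_def by (simp only:)
  also have "\<dots> = ev (snd T) \<phi> (concat (replicate (Suc j) E) @ E)"
    unfolding s_def by (rule ev_app[OF assms(1,2) ne assms(3), symmetric])
  also have "\<dots> = ev (snd T) \<phi> (concat (replicate (Suc (Suc j)) E))"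
    by (simp only: cr_snoc)
  finally show ?case unfolding s_def .
qed

lemma mu_bound:
  fixes w :: "fsg \<times> ('x \<Rightarrow> nat) \<Rightarrow> nat" and enc :: "'x \<Rightarrow> nat"
  assumes pv: "pseudovariety V" and exy: "ex \<noteq> ey"
  shows "w \<in> mu_words V \<Longrightarrow> \<exists>N. \<forall>T \<phi>. valid_idx V (T, \<phi>) \<longrightarrow>
     (\<exists>E. E \<noteq> [] \<and> w (T, \<phi>) = ev (snd T) \<phi> E \<and> card (Dset ex ey (map enc E)) \<le> N)"
proof (induction w rule: mu_words.induct)
  case (gen x)
  show ?case
  proof (intro exI[of _ 0] allI impI)
    fix T and \<phi> :: "'x \<Rightarrow> nat" assume "valid_idx V (T, \<phi>)"
    thus "\<exists>E. E \<noteq> [] \<and> pgen V x (T, \<phi>) = ev (snd T) \<phi> E \<and> card (Dset ex ey (map enc E)) \<le> 0"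
      by (intro exI[of _ "[x]"]) (auto simp: pgen_def Dset_short)
  qed
next
  case (mult u v)
  obtain Nu where Nu: "\<forall>T \<phi>. valid_idx V (T, \<phi>) \<longrightarrow>
     (\<exists>E. E \<noteq> [] \<and> u (T, \<phi>) = ev (snd T) \<phi> E \<and> card (Dset ex ey (map enc E)) \<le> Nu)"
    using mult.IH(1) by blast
  obtain Nv where Nv: "\<forall>T \<phi>. valid_idx V (T, \<phi>) \<longrightarrow>
     (\<exists>E. E \<noteq> [] \<and> v (T, \<phi>) = ev (snd T) \<phi> E \<and> card (Dset ex ey (map enc E)) \<le> Nv)"
    using mult.IH(2) by blast
  show ?case
  proof (intro exI[of _ "Nu + Nv + 1"] allI impI)
    fix T and \<phi> :: "'x \<Rightarrow> nat" assume vi: "valid_idx V (T, \<phi>)"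
    have fs: "is_fsg T" and r: "range \<phi> \<subseteq> fst T" using vi pv pv_fsg by (auto simp: valid_idx_def)
    obtain Eu where Eu: "Eu \<noteq> []" "u (T, \<phi>) = ev (snd T) \<phi> Eu" "card (Dset ex ey (map enc Eu)) \<le> Nu"
      using Nu vi by blast
    obtain Ev where Ev: "Ev \<noteq> []" "v (T, \<phi>) = ev (snd T) \<phi> Ev" "card (Dset ex ey (map enc Ev)) \<le> Nv"
      using Nv vi by blast
    have val: "pmult V u v (T, \<phi>) = ev (snd T) \<phi> (Eu @ Ev)"
      using vi Eu Ev ev_app[OF fs r] by (simp add: pmult_def)
    define C where "C = (if ey \<in> set (map enc Eu) \<and> ey \<in> set (map enc Ev)
        then {trail ex (map enc Eu) + lead ex (map enc Ev)} else {})"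
    have sub: "Dset ex ey (map enc (Eu @ Ev)) \<subseteq> Dset ex ey (map enc Eu) \<union> Dset ex ey (map enc Ev) \<union> C"
      using Dset_append[OF exy, of "map enc Eu" "map enc Ev"] unfolding C_def by simp
    have cC: "card C \<le> 1" unfolding C_def by auto
    have "card (Dset ex ey (map enc (Eu @ Ev))) \<le> card (Dset ex ey (map enc Eu) \<union> Dset ex ey (map enc Ev) \<union> C)"
      by (rule card_mono[OF _ sub]) (auto simp: Dset_fin C_def)
    also have "\<dots> \<le> card (Dset ex ey (map enc Eu)) + card (Dset ex ey (map enc Ev)) + card C"
      by (meson add_mono_thms_linordered_semiring(3) card_Un_le order_trans)
    finally have "card (Dset ex ey (map enc (Eu @ Ev))) \<le> Nu + Nv + 1" using Eu Ev cC by linarith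
    thus "\<exists>E. E \<noteq> [] \<and> pmult V u v (T, \<phi>) = ev (snd T) \<phi> E \<and> card (Dset ex ey (map enc E)) \<le> Nu + Nv + 1"
      using val Eu by (intro exI[of _ "Eu @ Ev"]) auto
  qed
next
  case (pow a u)
  obtain Nu where Nu: "\<forall>T \<phi>. valid_idx V (T, \<phi>) \<longrightarrow>
     (\<exists>E. E \<noteq> [] \<and> u (T, \<phi>) = ev (snd T) \<phi> E \<and> card (Dset ex ey (map enc E)) \<le> Nu)"
    using pow.IH by blast
  show ?case
  proof (intro exI[of _ "Nu + 1"] allI impI)
    fix T and \<phi> :: "'x \<Rightarrow> nat" assume vi: "valid_idx V (T, \<phi>)"
    have fs: "is_fsg T" and r: "range \<phi> \<subseteq> fst T" using vi pv pv_fsg by (auto simp: valid_idx_def)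
    obtain Eu where Eu: "Eu \<noteq> []" "u (T, \<phi>) = ev (snd T) \<phi> Eu" "card (Dset ex ey (map enc Eu)) \<le> Nu"
      using Nu vi by blast
    define k where "k = fact (card (fst T)) + a (fact (card (fst T)))"
    have "(1::nat) \<le> fact (card (fst T))" by (rule fact_ge_1)
    hence k1: "k \<ge> 1" unfolding k_def by linarith
    have "ppow V a u (T, \<phi>) = spow (snd T) (ev (snd T) \<phi> Eu) k"
      using vi Eu by (simp add: ppow_def apow_def k_def)
    also have "\<dots> = ev (snd T) \<phi> (concat (replicate (Suc (k - 1)) Eu))"
      unfolding spow_def by (rule spow_ev[OF fs r Eu(1)])
    also have "Suc (k - 1) = k" using k1 by simp
    finally have val: "ppow V a u (T, \<phi>) = ev (snd T) \<phi> (concat (replicate k Eu))" .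
    have me: "map enc (concat (replicate k Eu)) = concat (replicate k (map enc Eu))"
      by (simp add: map_concat)
    have sub: "Dset ex ey (map enc (concat (replicate k Eu))) \<subseteq>
        Dset ex ey (map enc Eu) \<union> {trail ex (map enc Eu) + lead ex (map enc Eu)}"
      unfolding me by (rule Dset_pow[OF exy k1])
    have "card (Dset ex ey (map enc (concat (replicate k Eu)))) \<le>
        card (Dset ex ey (map enc Eu) \<union> {trail ex (map enc Eu) + lead ex (map enc Eu)})"
      by (rule card_mono[OF _ sub]) (auto simp: Dset_fin)
    also have "\<dots> \<le> card (Dset ex ey (map enc Eu)) + 1"
      using card_Un_le[of "Dset ex ey (map enc Eu)" "{trail ex (map enc Eu) + lead ex (map enc Eu)}"] by simp
    finally have "card (Dset ex ey (map enc (concat (replicate k Eu)))) \<le> Nu + 1" using Eu by linarith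
    moreover have "concat (replicate k Eu) \<noteq> []" using k1 Eu(1) by (cases k) auto
    ultimately show "\<exists>E. E \<noteq> [] \<and> ppow V a u (T, \<phi>) = ev (snd T) \<phi> E \<and> card (Dset ex ey (map enc E)) \<le> Nu + 1"
      using val by blast
  qed
qed

lemma L_mem:
  "W \<in> {u @ v |u v. u \<in> {u @ v |u v. u \<in> Ap A \<and> v \<in> {z}} \<and> v \<in> Ap A}
    \<longleftrightarrow> (\<exists>p q. p \<in> Ap A \<and> q \<in> Ap A \<and> W = p @ z @ q)"
proof
  assume "W \<in> {u @ v |u v. u \<in> {u @ v |u v. u \<in> Ap A \<and> v \<in> {z}} \<and> v \<in> Ap A}"
  then obtain u q where uq: "W = u @ q" "u \<in> {u @ v |u v. u \<in> Ap A \<and> v \<in> {z}}" "q \<in> Ap A" by blast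
  from uq(2) obtain p where "u = p @ z" "p \<in> Ap A" by blast
  thus "\<exists>p q. p \<in> Ap A \<and> q \<in> Ap A \<and> W = p @ z @ q" using uq by (intro exI[of _ p] exI[of _ q]) simp
next
  assume "\<exists>p q. p \<in> Ap A \<and> q \<in> Ap A \<and> W = p @ z @ q"
  then obtain p q where pq: "p \<in> Ap A" "q \<in> Ap A" "W = p @ z @ q" by blast
  have "p @ z \<in> {u @ v |u v. u \<in> Ap A \<and> v \<in> {z}}" using pq(1) by blast
  moreover have "W = (p @ z) @ q" using pq(3) by simp
  ultimately show "W \<in> {u @ v |u v. u \<in> {u @ v |u v. u \<in> Ap A \<and> v \<in> {z}} \<and> v \<in> Ap A}"
    using pq(2) by blast
qed

theorem corollary2p4:
  fixes V :: "fsg set"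
  assumes "card (UNIV :: ('x::finite) set) \<ge> 2"
    and "pseudovariety V"
    and "nontrivial_pv V"
    and "closed_under_concat V"
  shows "(min_ideal V :: (fsg \<times> ('x \<Rightarrow> nat) \<Rightarrow> nat) set) \<inter> mu_words V = {}"
proof (rule ccontr)
  note pv = assms(2) and nt = assms(3) and cc = assms(4)
  assume "(min_ideal V :: (fsg \<times> ('x \<Rightarrow> nat) \<Rightarrow> nat) set) \<inter> mu_words V \<noteq> {}"
  then obtain w :: "fsg \<times> ('x \<Rightarrow> nat) \<Rightarrow> nat" where wm: "w \<in> min_ideal V" "w \<in> mu_words V" by blast
  obtain x y :: 'x where xy: "x \<noteq> y" using two_elems[OF assms(1)] by blast
  obtain enc :: "'x \<Rightarrow> nat" and n where "enc ` UNIV = {..<n}" "inj_on enc UNIV"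
    using finite_imp_inj_to_nat_seg[of "UNIV :: 'x set"] by auto
  hence inj: "inj enc" by simp
  define ex where "ex = enc x"
  define ey where "ey = enc y"
  have exy: "ex \<noteq> ey" using xy inj unfolding ex_def ey_def by (simp add: inj_eq)
  obtain N where N: "\<forall>T \<phi>. valid_idx V (T, \<phi>) \<longrightarrow>
     (\<exists>E. E \<noteq> [] \<and> w (T, \<phi>) = ev (snd T) \<phi> E \<and> card (Dset ex ey (map enc E)) \<le> N)"
    using mu_bound[OF pv exy wm(2), of enc] by blast
  define K where "K = Suc N"
  define z' where "z' = zz x y K"
  define z where "z = map enc z'"
  define A where "A = range enc"
  have fA: "finite A" unfolding A_def by simp
  have neA: "A \<noteq> {}" unfolding A_def by simp
  have z'ne: "z' \<noteq> []" unfolding z'_def using zz_last[of x y K] by auto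
  have zA: "z \<noteq> []" "set z \<subseteq> A" using z'ne unfolding z_def A_def by auto
  obtain S0 where S0: "S0 \<in> V" using nt unfolding nontrivial_pv_def by blast
  define L where "L = {u @ v |u v. u \<in> {u @ v |u v. u \<in> Ap A \<and> v \<in> {z}} \<and> v \<in> Ap A}"
  have VL: "V_lang V A L"
  proof -
    have "V_lang V A {z}" using vl_word[OF pv nt cc fA neA zA] .
    hence "V_lang V A {u @ v |u v. u \<in> Ap A \<and> v \<in> {z}}"
      using vl_conc[OF cc fA neA vl_univ[OF pv S0]] by blast
    thus ?thesis unfolding L_def using vl_conc[OF cc fA neA _ vl_univ[OF pv S0]] by blast
  qed
  then obtain T f P where T: "T \<in> V" "\<forall>a\<in>A. f a \<in> fst T" "P \<subseteq> fst T"
    "L = {E. E \<noteq> [] \<and> set E \<subseteq> A \<and> weval (snd T) f E \<in> P}" unfolding V_lang_def by blast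
  define \<phi> where "\<phi> = f \<circ> enc"
  have rT: "range \<phi> \<subseteq> fst T" using T(2) unfolding \<phi>_def A_def by auto
  have vi: "valid_idx V (T, \<phi>)" using T(1) rT by (simp add: valid_idx_def)
  have fsT: "is_fsg T" using pv_fsg[OF pv T(1)] .
  have key: "ev (snd T) \<phi> E \<in> P \<longleftrightarrow> (\<exists>p q. p \<in> Ap A \<and> q \<in> Ap A \<and> map enc E = p @ z @ q)"
    if "E \<noteq> []" for E
  proof -
    have "ev (snd T) \<phi> E = weval (snd T) f (map enc E)" unfolding \<phi>_def by (rule ev_weval)
    moreover have "map enc E \<noteq> []" "set (map enc E) \<subseteq> A" using that unfolding A_def by auto
    ultimately have "ev (snd T) \<phi> E \<in> P \<longleftrightarrow> map enc E \<in> L" using T(4) by simp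
    thus ?thesis unfolding L_def L_mem .
  qed
  define J :: "(fsg \<times> ('x \<Rightarrow> nat) \<Rightarrow> nat) set" where "J = {v \<in> free_pro V. v (T, \<phi>) \<in> P}"
  have ideal: "is_ideal V J"
    unfolding is_ideal_def
  proof (intro conjI ballI)
    show "J \<subseteq> free_pro V" unfolding J_def by blast
  next
    define E0 where "E0 = [x] @ z' @ [x]"
    have E0ne: "E0 \<noteq> []" unfolding E0_def by simp
    have "map enc E0 = [ex] @ z @ [ex]" unfolding E0_def z_def ex_def by simp
    moreover have "[ex] \<in> Ap A" unfolding Ap_def A_def ex_def by simp
    ultimately have "ev (snd T) \<phi> E0 \<in> P" using key[OF E0ne] by blast
    moreover have "wel V E0 (T, \<phi>) = ev (snd T) \<phi> E0" by (rule wel_val[OF vi E0ne])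
    moreover have "wel V E0 \<in> free_pro V" by (rule wel_in[OF pv E0ne])
    ultimately have "wel V E0 \<in> J" unfolding J_def by simp
    thus "J \<noteq> {}" by blast
  next
    fix u j :: "fsg \<times> ('x \<Rightarrow> nat) \<Rightarrow> nat" assume u: "u \<in> free_pro V" and j: "j \<in> J"
    have jf: "j \<in> free_pro V" and jP: "j (T, \<phi>) \<in> P" using j unfolding J_def by auto
    obtain Eu where Eu: "Eu \<noteq> []" "u (T, \<phi>) = ev (snd T) \<phi> Eu" using gen_val[OF pv vi u] by blast
    obtain Ej where Ej: "Ej \<noteq> []" "j (T, \<phi>) = ev (snd T) \<phi> Ej" using gen_val[OF pv vi jf] by blast
    obtain p q where pq: "p \<in> Ap A" "q \<in> Ap A" "map enc Ej = p @ z @ q"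
      using key[OF Ej(1)] jP Ej(2) by auto
    have EuA: "map enc Eu \<in> Ap A" using Eu(1) unfolding Ap_def A_def by auto
    have "map enc Eu @ p \<in> Ap A" using EuA pq(1) unfolding Ap_def by auto
    moreover have "map enc (Eu @ Ej) = (map enc Eu @ p) @ z @ q" using pq(3) by simp
    ultimately have m1: "ev (snd T) \<phi> (Eu @ Ej) \<in> P" using key[of "Eu @ Ej"] pq(2) Eu(1) by blast
    have "q @ map enc Eu \<in> Ap A" using EuA pq(2) unfolding Ap_def by auto
    moreover have "map enc (Ej @ Eu) = p @ z @ (q @ map enc Eu)" using pq(3) by simp
    ultimately have m2: "ev (snd T) \<phi> (Ej @ Eu) \<in> P" using key[of "Ej @ Eu"] pq(1) Ej(1) by blast
    have v1: "pmult V u j (T, \<phi>) = ev (snd T) \<phi> (Eu @ Ej)"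
      using vi Eu Ej ev_app[OF fsT rT] by (simp add: pmult_def)
    have v2: "pmult V j u (T, \<phi>) = ev (snd T) \<phi> (Ej @ Eu)"
      using vi Eu Ej ev_app[OF fsT rT] by (simp add: pmult_def)
    show "pmult V u j \<in> J" unfolding J_def using pmult_in[OF pv u jf] v1 m1 by simp
    show "pmult V j u \<in> J" unfolding J_def using pmult_in[OF pv jf u] v2 m2 by simp
  qed
  have "min_ideal V \<subseteq> J" unfolding min_ideal_def using ideal by (intro Inter_lower) simp
  hence wJ: "w (T, \<phi>) \<in> P" using wm(1) unfolding J_def by blast
  obtain E where E: "E \<noteq> []" "w (T, \<phi>) = ev (snd T) \<phi> E" "card (Dset ex ey (map enc E)) \<le> N"
    using N vi by blast
  obtain p q where pq: "map enc E = p @ z @ q" using key[OF E(1)] wJ E(2) by auto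
  have "{1..K} \<subseteq> Dset ex ey z" unfolding ex_def ey_def z_def z'_def by (rule Dset_zz[OF inj])
  also have "Dset ex ey z \<subseteq> Dset ex ey (map enc E)" unfolding pq by (rule Dset_mono_app)
  finally have "card {1..K} \<le> card (Dset ex ey (map enc E))" by (rule card_mono[OF Dset_fin])
  thus False using E(3) unfolding K_def by simp
qed

end
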